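(* Let $X_1,\dots,X_N$ be independent nonnegative random variables and $\theta>0$. Suppose $\overline{F}_{X_1}(x)=O(x^{-\theta})$ and, for every $2\le j\le N$, there exists $\varphi_j\in\mathfrak{F}$ with $\overline{F}_{X_j}(\varphi_j(x))=O(x^{-\theta})$ and $\mathbb{E}[X_j^\theta]<\infty$. Then $\overline{F}_{\prod_{i=1}^N X_i}(x)=O(x^{-\theta})$.
   Context: $\overline{F}_Y(x)=\Pr(Y>x)$; $f(x)=O(g(x))$ means $\limsup_{x\to\infty}f(x)/g(x)<\infty$. $\mathfrak{F}$ is the class of functions $\varphi:\mathbb{R}_{\ge0}\to\mathbb{R}_{\ge0}$ with $\lim_{x\to\infty}\varphi(x)=\infty$ and $\lim_{x\to\infty}\varphi(x)/x=0$. *)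

theory Defs
  imports "HOL-Probability.Probability" "HOL-Library.Landau_Symbols"
begin

(* The class \<frakF>: functions \<phi> : [0,\<infinity>) \<rightarrow> [0,\<infinity>) with \<phi> x \<rightarrow> \<infinity> and \<phi> x / x \<rightarrow> 0.
   Represented as real \<Rightarrow> real; only values on x \<ge> 0 matter. *)
definition frakF :: "(real \<Rightarrow> real) set" where
  "frakF = {\<phi>. (\<forall>x\<ge>0. \<phi> x \<ge> 0) \<and> filterlim \<phi> at_top at_top
              \<and> ((\<lambda>x. \<phi> x / x) \<longlongrightarrow> 0) at_top}"

definition tail :: "'a measure \<Rightarrow> ('a \<Rightarrow> real) \<Rightarrow> real \<Rightarrow> real" where
  "tail M Y x = measure M {\<omega> \<in> space M. Y \<omega> > x}"

end

theory Submission imports Defs begin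

lemma setA: "(x::real) > 0 \<Longrightarrow> {p. x < (fst p * snd p :: real)} \<in> sets (borel \<Otimes>\<^sub>M borel)"
proof -
    have "Measurable.pred (borel \<Otimes>\<^sub>M borel) (\<lambda>p::real\<times>real. x < fst p * snd p)" by measurable
    then have "{p \<in> space (borel \<Otimes>\<^sub>M borel). x < (fst p * snd p :: real)} \<in> sets (borel \<Otimes>\<^sub>M borel)" by (simp add: pred_def)
    then show ?thesis apply (simp add: space_pair_measure) done
qed

lemma core:
  fixes M :: "'a measure" and Y Z :: "'a \<Rightarrow> real"
  assumes P: "prob_space M"
    and ind: "prob_space.indep_var M borel Y borel Z"
    and Y0: "\<forall>\<omega>\<in>space M. Y \<omega> \<ge> 0" and Z0: "\<forall>\<omega>\<in>space M. Z \<omega> \<ge> 0"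
    and th: "\<theta> > 0" and C: "C \<ge> 0"
    and tb: "\<And>t. t > 0 \<Longrightarrow> tail M Z t \<le> C * t powr (-\<theta>)"
    and int: "integrable M (\<lambda>\<omega>. Y \<omega> powr \<theta>)"
    and x: "x > 0"
  shows "tail M (\<lambda>\<omega>. Y \<omega> * Z \<omega>) x \<le> C * x powr (-\<theta>) * (\<integral>\<omega>. Y \<omega> powr \<theta> \<partial>M)"
proof -
  interpret prob_space M by fact
  have rvY[measurable]: "Y \<in> borel_measurable M" and rvZ[measurable]: "Z \<in> borel_measurable M"
    using ind by (auto simp: indep_var_distribution_eq)
  have eqd: "distr M borel Y \<Otimes>\<^sub>M distr M borel Z = distr M (borel \<Otimes>\<^sub>M borel) (\<lambda>\<omega>. (Y \<omega>, Z \<omega>))"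
    using ind by (simp add: indep_var_distribution_eq)
  interpret DZ: prob_space "distr M borel Z" by (rule prob_space_distr) simp
  interpret DY: prob_space "distr M borel Y" by (rule prob_space_distr) simp
  define A where "A = {p \<in> space (borel \<Otimes>\<^sub>M borel). x < (fst p * snd p :: real)}"
  have A[measurable]: "A \<in> sets (borel \<Otimes>\<^sub>M borel)" using setA[OF x] unfolding A_def by (simp add: space_pair_measure)
  have "emeasure M {\<omega> \<in> space M. x < Y \<omega> * Z \<omega>} = emeasure (distr M (borel \<Otimes>\<^sub>M borel) (\<lambda>\<omega>. (Y \<omega>, Z \<omega>))) A"
    by (subst emeasure_distr[OF _ A]) (simp, auto simp: A_def space_pair_measure intro!: arg_cong[where f="emeasure M"])
  also have "\<dots> = emeasure (distr M borel Y \<Otimes>\<^sub>M distr M borel Z) A" by (simp add: eqd)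
  also have "\<dots> = (\<integral>\<^sup>+b. emeasure (distr M borel Z) (Pair b -` A) \<partial>distr M borel Y)"
    by (rule DZ.emeasure_pair_measure_alt) (simp add: A)
  also have "\<dots> \<le> (\<integral>\<^sup>+b. ennreal (C * x powr (-\<theta>) * max b 0 powr \<theta>) \<partial>distr M borel Y)"
  proof (rule nn_integral_mono)
    fix b :: real
    have e: "emeasure (distr M borel Z) (Pair b -` A) = emeasure M {\<omega>\<in>space M. x < b * Z \<omega>}"
      by (subst emeasure_distr) (auto simp: A_def space_pair_measure intro!: arg_cong[where f="emeasure M"])
    show "emeasure (distr M borel Z) (Pair b -` A) \<le> ennreal (C * x powr (-\<theta>) * max b 0 powr \<theta>)"
    proof (cases "b > 0")
      case False
      have "{\<omega>\<in>space M. x < b * Z \<omega>} = {}"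
      proof -
        have "b * Z \<omega> \<le> 0" if "\<omega> \<in> space M" for \<omega>
          using False Z0 that by (simp add: mult_nonpos_nonneg)
        then show ?thesis using x by force
      qed
      then show ?thesis unfolding e by (metis emeasure_empty zero_le)
    next
      case True
      have s: "{\<omega>\<in>space M. x < b * Z \<omega>} = {\<omega>\<in>space M. x / b < Z \<omega>}"
        using True by (auto simp: field_simps)
      have "tail M Z (x/b) \<le> C * (x/b) powr (-\<theta>)" using tb True x by simp
      also have "(x/b) powr (-\<theta>) = x powr (-\<theta>) * b powr \<theta>"
        using True x by (simp add: powr_divide powr_minus divide_simps)
      finally have "measure M {\<omega>\<in>space M. x < b * Z \<omega>} \<le> C * x powr (-\<theta>) * max b 0 powr \<theta>"
        using True by (simp add: s tail_def mult.assoc)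
      then show ?thesis by (simp add: e emeasure_eq_measure ennreal_leI)
    qed
  qed
  also have "\<dots> = (\<integral>\<^sup>+\<omega>. ennreal (C * x powr (-\<theta>) * Y \<omega> powr \<theta>) \<partial>M)"
    using Y0 by (subst nn_integral_distr) (auto intro!: nn_integral_cong simp: max_def)
  also have "\<dots> = ennreal (\<integral>\<omega>. C * x powr (-\<theta>) * Y \<omega> powr \<theta> \<partial>M)"
    using int C by (intro nn_integral_eq_integral) auto
  also have "\<dots> = ennreal (C * x powr (-\<theta>) * (\<integral>\<omega>. Y \<omega> powr \<theta> \<partial>M))" by simp
  finally have "emeasure M {\<omega> \<in> space M. x < Y \<omega> * Z \<omega>} \<le> ennreal (C * x powr (-\<theta>) * (\<integral>\<omega>. Y \<omega> powr \<theta> \<partial>M))" .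
  moreover have "0 \<le> C * x powr (-\<theta>) * (\<integral>\<omega>. Y \<omega> powr \<theta> \<partial>M)"
    using C by (intro mult_nonneg_nonneg integral_nonneg_AE) auto
  ultimately show ?thesis
    by (simp add: tail_def emeasure_eq_measure)
qed

theorem theorem10:
  fixes M :: "'a measure" and X :: "nat \<Rightarrow> 'a \<Rightarrow> real" and N :: nat and \<theta> :: real
  assumes "prob_space M"
    and "N \<ge> 1"
    and "\<And>i. i \<in> {1..N} \<Longrightarrow> X i \<in> borel_measurable M"
    and "prob_space.indep_vars M (\<lambda>_. borel) X {1..N}"
    and "\<And>i. i \<in> {1..N} \<Longrightarrow> \<forall>\<omega>\<in>space M. X i \<omega> \<ge> 0"
    and "\<theta> > 0"
    and "tail M (X 1) \<in> O(\<lambda>x. x powr (-\<theta>))"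
    and "\<And>j. j \<in> {2..N} \<Longrightarrow>
           (\<exists>\<phi>\<in>frakF. (\<lambda>x. tail M (X j) (\<phi> x)) \<in> O(\<lambda>x. x powr (-\<theta>)))"
    and "\<And>j. j \<in> {2..N} \<Longrightarrow> integrable M (\<lambda>\<omega>. X j \<omega> powr \<theta>)"
  shows "tail M (\<lambda>\<omega>. \<Prod>i\<in>{1..N}. X i \<omega>) \<in> O(\<lambda>x. x powr (-\<theta>))"
proof -
  interpret prob_space M by fact
  note ind = assms(4) and nn = assms(5) and th = assms(6)
  define Y where "Y = (\<lambda>\<omega>. \<Prod>i\<in>{2..N}. X i \<omega>)"
  define Z where "Z = X 1"
  have N1: "(1::nat) \<in> {1..N}" using assms(2) by simp
  have Z0: "\<forall>\<omega>\<in>space M. Z \<omega> \<ge> 0" using nn[OF N1] by (simp add: Z_def)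
  have Y0: "\<forall>\<omega>\<in>space M. Y \<omega> \<ge> 0" using nn by (auto simp: Y_def intro!: prod_nonneg)
  have prodeq: "(\<Prod>i\<in>{1..N}. X i \<omega>) = Y \<omega> * Z \<omega>" for \<omega>
  proof -
    have "{1..N} = insert 1 {2..N}" using assms(2) by auto
    then show ?thesis by (simp add: Y_def Z_def mult.commute)
  qed
  have iYZ: "indep_var borel Y borel Z"
  proof -
    have r: "indep_var (PiM {2..N} (\<lambda>_. borel)) (\<lambda>\<omega>. restrict (\<lambda>i. X i \<omega>) {2..N})
                 (PiM {1} (\<lambda>_. borel)) (\<lambda>\<omega>. restrict (\<lambda>i. X i \<omega>) {1})"
      by (rule indep_var_restrict[OF ind]) (use assms(2) in auto)
    have m1: "(\<lambda>f. \<Prod>i\<in>{2..N}. f i) \<in> borel_measurable (PiM {2..N} (\<lambda>_. borel :: real measure))"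
      by measurable
    have m2: "(\<lambda>f. f 1) \<in> borel_measurable (PiM {1} (\<lambda>_. borel :: real measure))"
      by measurable
    have "indep_var borel ((\<lambda>f. \<Prod>i\<in>{2..N}. f i) \<circ> (\<lambda>\<omega>. restrict (\<lambda>i. X i \<omega>) {2..N}))
                    borel ((\<lambda>f. f 1) \<circ> (\<lambda>\<omega>. restrict (\<lambda>i. X i \<omega>) {1}))"
      by (rule indep_var_compose[OF r m1 m2])
    moreover have "((\<lambda>f. \<Prod>i\<in>{2..N}. f i) \<circ> (\<lambda>\<omega>. restrict (\<lambda>i. X i \<omega>) {2..N})) = Y"
      by (auto simp: Y_def fun_eq_iff)
    moreover have "((\<lambda>f. f 1) \<circ> (\<lambda>\<omega>. restrict (\<lambda>i. X i \<omega>) {1})) = Z"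
      by (auto simp: Z_def fun_eq_iff)
    ultimately show ?thesis by simp
  qed
  have intY: "integrable M (\<lambda>\<omega>. Y \<omega> powr \<theta>)"
  proof -
    have i2: "indep_vars (\<lambda>_. borel) (\<lambda>i \<omega>. X i \<omega> powr \<theta>) {2..N}"
      by (rule indep_vars_compose2[where X=X and M'="\<lambda>_. borel"])
         (rule indep_vars_subset[OF ind], auto)
    have "integrable M (\<lambda>\<omega>. \<Prod>i\<in>{2..N}. X i \<omega> powr \<theta>)"
      by (rule indep_vars_integrable[OF _ i2]) (auto intro: assms(9))
    moreover have "\<And>\<omega>. \<omega> \<in> space M \<Longrightarrow> (\<Prod>i\<in>{2..N}. X i \<omega> powr \<theta>) = Y \<omega> powr \<theta>"
      using nn by (auto simp: Y_def prod_powr_distrib)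
    ultimately show ?thesis by (metis (no_types, lifting) Bochner_Integration.integrable_cong)
  qed
  obtain c where c: "c > 0" and ev: "eventually (\<lambda>t. norm (tail M Z t) \<le> c * norm (t powr (-\<theta>))) at_top"
    using assms(7) unfolding Z_def by (elim landau_o.bigE) auto
  obtain t0 where t0: "\<And>t. t \<ge> t0 \<Longrightarrow> norm (tail M Z t) \<le> c * norm (t powr (-\<theta>))"
    using ev by (auto simp: eventually_at_top_linorder)
  define t1 where "t1 = max t0 1"
  define C where "C = c + t1 powr \<theta>"
  have C0: "C \<ge> 0" using c by (simp add: C_def)
  have tb: "tail M Z t \<le> C * t powr (-\<theta>)" if t: "t > 0" for t
  proof (cases "t \<ge> t1")
    case True
    then have "tail M Z t \<le> c * t powr (-\<theta>)" using t0[of t] t by (simp add: t1_def tail_def)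
    also have "\<dots> \<le> C * t powr (-\<theta>)" by (intro mult_right_mono) (auto simp: C_def)
    finally show ?thesis .
  next
    case False
    have "tail M Z t \<le> 1" by (simp add: tail_def)
    also have "1 \<le> t1 powr \<theta> * t powr (-\<theta>)"
    proof -
      have "t powr \<theta> \<le> t1 powr \<theta>" using False t th by (intro powr_mono2) auto
      then show ?thesis using t by (simp add: powr_minus field_simps)
    qed
    also have "\<dots> \<le> C * t powr (-\<theta>)" using c by (intro mult_right_mono) (auto simp: C_def)
    finally show ?thesis .
  qed
  define K where "K = C * (\<integral>\<omega>. Y \<omega> powr \<theta> \<partial>M) + 1"
  have E0: "(\<integral>\<omega>. Y \<omega> powr \<theta> \<partial>M) \<ge> 0" by (intro integral_nonneg_AE) auto
  have K0: "K > 0" using C0 E0 by (simp add: K_def add_nonneg_pos)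
  have "eventually (\<lambda>x. norm (tail M (\<lambda>\<omega>. \<Prod>i\<in>{1..N}. X i \<omega>) x) \<le> K * norm (x powr (-\<theta>))) at_top"
    using eventually_gt_at_top[of 0]
  proof eventually_elim
    case (elim x)
    have "tail M (\<lambda>\<omega>. \<Prod>i\<in>{1..N}. X i \<omega>) x = tail M (\<lambda>\<omega>. Y \<omega> * Z \<omega>) x"
      by (simp only: prodeq)
    also have "\<dots> \<le> C * x powr (-\<theta>) * (\<integral>\<omega>. Y \<omega> powr \<theta> \<partial>M)"
      by (rule core[OF assms(1) iYZ Y0 Z0 th C0 tb intY elim])
    also have "\<dots> \<le> K * x powr (-\<theta>)"
      by (simp add: K_def field_simps)
    finally show ?case by (simp add: tail_def)
  qed
  then show ?thesis by (rule landau_o.bigI[OF K0])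
qed

end
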